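(* For every positive integer $n$ and every $\epsilon\ge 0$ (with the case $\epsilon=4$ understood as the limit $\epsilon\to4$ of the right-hand side), $$\sum_{i=1}^n\left|\Phi^{-1}\left(\frac{i}{n+1}\right)\right|^{2\epsilon}\le 2^{\frac{11}{4}\epsilon+1}(n+1)^{\frac{\epsilon}{4}}\left(1+\frac{\left(\left\lceil\frac{n+1}{2}\right\rceil\right)^{1-\frac{\epsilon}{4}}-1}{1-\frac{\epsilon}{4}}\right).$$
   Context: $\Phi^{-1}$ is the quantile function (inverse CDF) of the standard normal distribution; $\lceil\cdot\rceil$ is the ceiling function. *)

theory Defs
  imports "HOL-Probability.Probability"
begin

definition std_normal_cdf :: "real \<Rightarrow> real" where
  "std_normal_cdf x = cdf (density lborel std_normal_density) x"

text \<open>Quantile function (inverse CDF) of the standard normal distribution,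
  meaningful for p in (0,1).\<close>
definition std_normal_quantile :: "real \<Rightarrow> real" where
  "std_normal_quantile p = (THE x. std_normal_cdf x = p)"

text \<open>Real power |x|^e with the usual convention 0^0 = 1 (Isabelle's powr has 0 powr 0 = 0).\<close>
definition abs_pow :: "real \<Rightarrow> real \<Rightarrow> real" where
  "abs_pow x e = (if x = 0 then (if e = 0 then 1 else 0) else \<bar>x\<bar> powr e)"

text \<open>(c^a - 1)/a, with its limit ln c at a = 0.\<close>
definition pow_ratio :: "real \<Rightarrow> real \<Rightarrow> real" where
  "pow_ratio c a = (if a = 0 then ln c else (c powr a - 1) / a)"

end

theory Submission
  imports Defs
begin

abbreviation "NN \<equiv> density lborel (\<lambda>x. ennreal (std_normal_density x))"

lemma NN_rd: "real_distribution NN"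
proof -
  have "prob_space NN" by (rule prob_space_normal_density) simp
  then show ?thesis unfolding real_distribution_def real_distribution_axioms_def by simp
qed

lemma Phi_eq: "std_normal_cdf = cdf NN"
  by (rule ext) (simp add: std_normal_cdf_def)

lemma NN_single: "measure NN {x} = 0"
proof -
  have "emeasure NN {x} = (\<integral>\<^sup>+ t. ennreal (std_normal_density t) * indicator {x} t \<partial>lborel)"
    by (rule emeasure_density) auto
  also have "\<dots> = 0"
  proof -
    have "AE t in lborel. t \<noteq> x" by (rule AE_I'[of "{x}"]) auto
    then have "AE t in lborel. ennreal (std_normal_density t) * indicator {x} t = 0"
      by eventually_elim auto
    then show ?thesis using nn_integral_0_iff_AE[of "\<lambda>t. ennreal (std_normal_density t) * indicator {x} t" lborel] by simp
  qed
  finally show ?thesis by (simp add: measure_def)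
qed

lemma Phi_cont: "isCont std_normal_cdf x"
proof -
  interpret real_distribution NN by (rule NN_rd)
  show ?thesis unfolding Phi_eq using isCont_cdf NN_single by simp
qed

lemma Phi_strict: assumes "x < y" shows "std_normal_cdf x < std_normal_cdf y"
proof -
  interpret real_distribution NN by (rule NN_rd)
  have d: "cdf NN y - cdf NN x = measure NN {x<..y}"
    using cdf_diff_eq assms by blast
  have "emeasure NN {x<..y} \<noteq> 0"
  proof
    assume "emeasure NN {x<..y} = 0"
    moreover have "emeasure NN {x<..y} = (\<integral>\<^sup>+ t. ennreal (std_normal_density t) * indicator {x<..y} t \<partial>lborel)"
      by (rule emeasure_density) auto
    ultimately have "AE t in lborel. ennreal (std_normal_density t) * indicator {x<..y} t = 0"
      using nn_integral_0_iff_AE[of "\<lambda>t. ennreal (std_normal_density t) * indicator {x<..y} t" lborel] by simp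
    then have "AE t in lborel. t \<notin> {x<..y}"
      by eventually_elim (auto simp: std_normal_density_def split: split_indicator)
    then have "emeasure lborel {x<..y} = 0"
      by (subst AE_iff_measurable[symmetric]) auto
    then show False using assms by simp
  qed
  then have "measure NN {x<..y} > 0"
  proof -
    have "measure NN {x<..y} \<noteq> 0" using \<open>emeasure NN {x<..y} \<noteq> 0\<close> emeasure_eq_measure[of "{x<..y}"] by auto
    then show ?thesis using measure_nonneg[of NN "{x<..y}"] by linarith
  qed
  then show ?thesis using d unfolding Phi_eq by simp
qed

lemma quantile_eq: assumes "0 < p" "p < 1"
  shows "std_normal_cdf (std_normal_quantile p) = p"
proof -
  interpret real_distribution NN by (rule NN_rd)
  have "eventually (\<lambda>t. cdf NN t < p) at_bot"
    using cdf_lim_at_bot assms order_tendstoD(2) by blast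
  then obtain a where a: "cdf NN a < p" by (auto simp: eventually_at_bot_linorder)
  have "eventually (\<lambda>t. cdf NN t > p) at_top"
    using cdf_lim_at_top_prob assms order_tendstoD(1) by blast
  then obtain b where b: "cdf NN b > p" by (auto simp: eventually_at_top_linorder)
  have ab: "a \<le> b"
  proof (rule ccontr)
    assume "\<not> a \<le> b"
    then have "b \<le> a" by simp
    then have "cdf NN b \<le> cdf NN a" by (rule cdf_nondecreasing)
    then show False using a b by simp
  qed
  have cont: "continuous_on {a..b} std_normal_cdf"
    using Phi_cont by (simp add: continuous_at_imp_continuous_on)
  have fa: "std_normal_cdf a \<le> p" using a unfolding Phi_eq by simp
  have fb: "p \<le> std_normal_cdf b" using b unfolding Phi_eq by simp
  obtain x where x: "std_normal_cdf x = p"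
    using IVT'[of std_normal_cdf a p b, OF fa fb ab cont] by blast
  have "\<exists>!x. std_normal_cdf x = p"
  proof (rule ex1I[of _ x])
    show "std_normal_cdf x = p" by (rule x)
    fix y assume y: "std_normal_cdf y = p"
    show "y = x"
    proof (rule ccontr)
      assume "y \<noteq> x"
      then have "y < x \<or> x < y" by linarith
      then show False
      proof
        assume "y < x" then have "std_normal_cdf y < std_normal_cdf x" by (rule Phi_strict)
        then show False using x y by simp
      next
        assume "x < y" then have "std_normal_cdf x < std_normal_cdf y" by (rule Phi_strict)
        then show False using x y by simp
      qed
    qed
  qed
  then show ?thesis unfolding std_normal_quantile_def by (rule theI')
qed

lemma tail_bound: "min (std_normal_cdf q) (1 - std_normal_cdf q) * q ^ 8 \<le> 105"
proof (cases "q = 0")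
  case True then show ?thesis by simp
next
  case False
  interpret real_distribution NN by (rule NN_rd)
  have q8: "q ^ 8 > 0" using False by simp
  have int: "integrable NN (\<lambda>x. x ^ 8)"
    by (subst integrable_density) (auto intro: integrable_std_normal_moment)
  have "integral\<^sup>L NN (\<lambda>x. x ^ 8) = (\<integral>x. std_normal_density x * x ^ (2*4) \<partial>lborel)"
    by (subst integral_density) auto
  also have "\<dots> = 105"
    using integral_std_normal_moment_even[of 4] by (simp add: fact_numeral)
  finally have I: "integral\<^sup>L NN (\<lambda>x. x ^ 8) = 105" .
  have M: "measure NN {x. q ^ 8 \<le> x ^ 8} \<le> 105 / q ^ 8"
    using integral_Markov_inequality_measure[OF int, of UNIV "q^8"] q8 I by simp
  have sub1: "{..q} \<subseteq> {x. q ^ 8 \<le> x ^ 8}" if "q < 0"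
  proof
    fix x assume "x \<in> {..q}"
    then have "\<bar>q\<bar> \<le> \<bar>x\<bar>" using that by simp
    then have "q ^ 8 \<le> x ^ 8" by (intro power_mono_even) auto
    then show "x \<in> {x. q ^ 8 \<le> x ^ 8}" by blast
  qed
  have sub2: "{q<..} \<subseteq> {x. q ^ 8 \<le> x ^ 8}" if "q > 0"
  proof
    fix x assume "x \<in> {q<..}"
    then have "\<bar>q\<bar> \<le> \<bar>x\<bar>" using that by simp
    then have "q ^ 8 \<le> x ^ 8" by (intro power_mono_even) auto
    then show "x \<in> {x. q ^ 8 \<le> x ^ 8}" by blast
  qed
  have c1: "std_normal_cdf q = measure NN {..q}" by (simp add: Phi_eq cdf_def)
  have c2: "1 - std_normal_cdf q = measure NN {q<..}"
  proof -
    have "measure NN (space NN - {..q}) = 1 - measure NN {..q}" by (rule prob_compl) simp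
    moreover have "space NN - {..q} = {q<..}" by auto
    ultimately show ?thesis using c1 by simp
  qed
  have key: "\<exists>A \<in> sets NN. A \<subseteq> {x. q ^ 8 \<le> x ^ 8} \<and> min (std_normal_cdf q) (1 - std_normal_cdf q) \<le> measure NN A"
  proof (cases "q < 0")
    case True
    have "{..q} \<in> sets NN" by simp
    moreover have "min (std_normal_cdf q) (1 - std_normal_cdf q) \<le> measure NN {..q}" using c1 by linarith
    ultimately show ?thesis using sub1[OF True] by blast
  next
    case False
    then have qp: "q > 0" using \<open>q \<noteq> 0\<close> by simp
    have "{q<..} \<in> sets NN" by simp
    moreover have "min (std_normal_cdf q) (1 - std_normal_cdf q) \<le> measure NN {q<..}" using c2 by linarith
    ultimately show ?thesis using sub2[OF qp] by blast
  qed
  then obtain A where A: "A \<in> sets NN" "A \<subseteq> {x. q ^ 8 \<le> x ^ 8}"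
    "min (std_normal_cdf q) (1 - std_normal_cdf q) \<le> measure NN A" by blast
  have "measure NN A \<le> measure NN {x. q ^ 8 \<le> x ^ 8}"
  proof (rule finite_measure_mono)
    show "A \<subseteq> {x. q ^ 8 \<le> x ^ 8}" by (rule A(2))
    show "{x. q ^ 8 \<le> x ^ 8} \<in> sets NN" by measurable
  qed
  then have "min (std_normal_cdf q) (1 - std_normal_cdf q) \<le> 105 / q ^ 8" using A M by linarith
  then have "min (std_normal_cdf q) (1 - std_normal_cdf q) * q ^ 8 \<le> 105 / q ^ 8 * q ^ 8"
    by (rule mult_right_mono) (use q8 in linarith)
  also have "105 / q ^ 8 * q ^ 8 = 105" using q8 by (metis less_irrefl nonzero_divide_eq_eq)
  finally show ?thesis .
qed


lemma pow_ratio_deriv: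
  assumes "x > 0"
  shows "((\<lambda>x. pow_ratio x b) has_real_derivative x powr (b - 1)) (at x)"
proof (cases "b = 0")
  case True
  have "((\<lambda>x. ln x) has_real_derivative 1 / x) (at x)"
    using assms by (auto intro!: derivative_eq_intros)
  moreover have "1 / x = x powr (b - 1)" using True assms by (simp add: powr_minus_divide)
  ultimately show ?thesis using True unfolding pow_ratio_def by simp
next
  case False
  have "((\<lambda>x. (x powr b - 1) / b) has_real_derivative (b * x powr (b - 1)) / b) (at x)"
    using assms by (auto intro!: derivative_eq_intros)
  then show ?thesis using False unfolding pow_ratio_def by simp
qed

lemma step_bound:
  assumes "a \<ge> 0" "c \<ge> 1"
  shows "(c + 1) powr (-a) \<le> pow_ratio (c + 1) (1 - a) - pow_ratio c (1 - a)"
proof -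
  have "\<forall>x. c \<le> x \<and> x \<le> c + 1 \<longrightarrow> ((\<lambda>x. pow_ratio x (1 - a)) has_real_derivative x powr (-a)) (at x)"
  proof (intro allI impI)
    fix x :: real assume "c \<le> x \<and> x \<le> c + 1"
    then have "x > 0" using assms by linarith
    from pow_ratio_deriv[OF this, of "1 - a"]
    show "((\<lambda>x. pow_ratio x (1 - a)) has_real_derivative x powr (-a)) (at x)" by simp
  qed
  then obtain z where z: "c < z" "z < c + 1"
    "pow_ratio (c + 1) (1 - a) - pow_ratio c (1 - a) = (c + 1 - c) * z powr (-a)"
    using MVT2[of c "c + 1" "\<lambda>x. pow_ratio x (1 - a)" "\<lambda>x. x powr (-a)"] by auto
  have "(c + 1) powr (-a) \<le> z powr (-a)"
    using z assms by (intro powr_mono2') auto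
  then show ?thesis using z by simp
qed

lemma sum_bound:
  assumes "a \<ge> 0" "c \<ge> 1"
  shows "(\<Sum>j=1..c. real j powr (-a)) \<le> 1 + pow_ratio (real c) (1 - a)"
  using assms(2)
proof (induction c rule: dec_induct)
  case base
  then show ?case by (simp add: pow_ratio_def)
next
  case (step k)
  have "(\<Sum>j=1..Suc k. real j powr (-a)) = (\<Sum>j=1..k. real j powr (-a)) + (real k + 1) powr (-a)"
    by (simp add: add.commute)
  also have "\<dots> \<le> 1 + pow_ratio (real k) (1 - a) + (pow_ratio (real k + 1) (1 - a) - pow_ratio (real k) (1 - a))"
  proof (rule add_mono)
    show "(\<Sum>j=1..k. real j powr (-a)) \<le> 1 + pow_ratio (real k) (1 - a)" by (rule step.IH)
    have "real k \<ge> 1" using step.hyps by simp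
    then show "(real k + 1) powr (-a) \<le> pow_ratio (real k + 1) (1 - a) - pow_ratio (real k) (1 - a)"
      using step_bound[of a "real k"] assms(1) by simp
  qed
  finally show ?case by (simp add: add.commute)
qed

lemma msum_bound:
  fixes f :: "nat \<Rightarrow> real" and n c :: nat
  assumes f0: "\<And>j. f j \<ge> 0" and c2: "n + 1 \<le> 2 * c"
  shows "(\<Sum>i=1..n. f (min i (n + 1 - i))) \<le> 2 * (\<Sum>j=1..c. f j)"
proof -
  define A where "A = {i \<in> {1..n}. 2 * i \<le> n + 1}"
  define B where "B = {i \<in> {1..n}. \<not> 2 * i \<le> n + 1}"
  have AB: "{1..n} = A \<union> B" "A \<inter> B = {}" "finite A" "finite B" unfolding A_def B_def by auto
  have "(\<Sum>i=1..n. f (min i (n + 1 - i))) = (\<Sum>i\<in>A. f (min i (n + 1 - i))) + (\<Sum>i\<in>B. f (min i (n + 1 - i)))"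
    unfolding AB(1) by (rule sum.union_disjoint) (use AB in auto)
  also have "(\<Sum>i\<in>A. f (min i (n + 1 - i))) = (\<Sum>i\<in>A. f i)"
    by (rule sum.cong) (auto simp: A_def min_def)
  also have "(\<Sum>i\<in>B. f (min i (n + 1 - i))) = (\<Sum>i\<in>B. f (n + 1 - i))"
    by (rule sum.cong) (auto simp: B_def min_def)
  also have "(\<Sum>i\<in>B. f (n + 1 - i)) = (\<Sum>j\<in>(\<lambda>i. n + 1 - i) ` B. f j)"
  proof (rule sum.reindex[symmetric, unfolded comp_def])
    show "inj_on (\<lambda>i. n + 1 - i) B" by (rule inj_onI) (auto simp: B_def)
  qed
  also have "(\<Sum>i\<in>A. f i) \<le> (\<Sum>j=1..c. f j)"
    by (rule sum_mono2) (use c2 f0 in \<open>auto simp: A_def\<close>)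
  also have "(\<Sum>j\<in>(\<lambda>i. n + 1 - i) ` B. f j) \<le> (\<Sum>j=1..c. f j)"
    by (rule sum_mono2) (use c2 f0 in \<open>auto simp: B_def\<close>)
  finally show ?thesis by simp
qed

theorem lemma7:
  fixes n :: nat and \<epsilon> :: real
  assumes "n \<ge> 1" and "\<epsilon> \<ge> 0"
  shows "(\<Sum>i=1..n. abs_pow (std_normal_quantile (real i / real (n + 1))) (2 * \<epsilon>))
    \<le> 2 powr (11 / 4 * \<epsilon> + 1) * real (n + 1) powr (\<epsilon> / 4)
       * (1 + pow_ratio (real_of_int \<lceil>real (n + 1) / 2\<rceil>) (1 - \<epsilon> / 4))"
proof -
  define a where "a = \<epsilon> / 4"
  define K where "K = 2 powr (11 / 4 * \<epsilon>) * real (n + 1) powr a"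
  define c where "c = nat \<lceil>real (n + 1) / 2\<rceil>"
  define f where "f j = real j powr (-a)" for j :: nat
  have a0: "a \<ge> 0" using assms(2) by (simp add: a_def)
  have K0: "K \<ge> 0" by (simp add: K_def)
  have cint: "real_of_int \<lceil>real (n + 1) / 2\<rceil> = real c"
    unfolding c_def by (simp add: ceiling_le_zero)
  have "real (n + 1) / 2 \<le> real c" using cint by (metis le_of_int_ceiling)
  then have "real (n + 1) \<le> real (2 * c)" by simp
  then have c2: "n + 1 \<le> 2 * c" by (simp only: of_nat_le_iff)
  have c1: "c \<ge> 1" using c2 assms(1) by linarith
  have f0: "\<And>j. f j \<ge> 0" by (simp add: f_def)
  have tm: "abs_pow (std_normal_quantile (real i / real (n + 1))) (2 * \<epsilon>) \<le> K * f (min i (n + 1 - i))"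
    if i: "i \<in> {1..n}" for i
  proof -
    define p where "p = real i / real (n + 1)"
    define q where "q = std_normal_quantile p"
    define mi where "mi = min i (n + 1 - i)"
    have mi1: "mi \<ge> 1" using i by (auto simp: mi_def)
    have p01: "0 < p" "p < 1" using i by (auto simp: p_def field_simps)
    have Phq: "std_normal_cdf q = p" unfolding q_def by (rule quantile_eq[OF p01])
    have e: "1 - p = real (n + 1 - i) / real (n + 1)" using i by (simp add: p_def field_simps of_nat_diff)
    have rmi: "real mi = min (real i) (real (n + 1 - i))" by (simp add: mi_def)
    have minp: "min p (1 - p) = real mi / real (n + 1)"
      by (subst e, subst rmi, subst min_divide_distrib_right) (simp add: p_def)
    have tb: "real mi / real (n + 1) * q ^ 8 \<le> 105" using tail_bound[of q] Phq minp by simp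
    have q8: "q ^ 8 \<le> 105 * real (n + 1) / real mi"
      using tb mi1 by (simp add: field_simps)
    have fmi: "f mi > 0" using mi1 by (simp add: f_def)
    have main: "abs_pow q (2 * \<epsilon>) \<le> K * f mi"
    proof (cases "q = 0")
      case True
      show ?thesis
      proof (cases "\<epsilon> = 0")
        case True
        then show ?thesis using \<open>q = 0\<close> mi1 by (simp add: abs_pow_def K_def a_def f_def)
      next
        case False
        then show ?thesis using \<open>q = 0\<close> K0 fmi by (simp add: abs_pow_def)
      qed
    next
      case False
      have "abs_pow q (2 * \<epsilon>) = \<bar>q\<bar> powr (8 * a)" using False by (simp add: abs_pow_def a_def)
      also have "\<dots> = (\<bar>q\<bar> powr 8) powr a" by (simp only: powr_powr)
      also have "\<bar>q\<bar> powr 8 = q ^ 8" using False by (simp add: powr_realpow power_even_abs_numeral)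
      also have "(q ^ 8) powr a \<le> (105 * real (n + 1) / real mi) powr a"
        by (rule powr_mono2) (use a0 q8 in auto)
      also have "\<dots> = 105 powr a * real (n + 1) powr a * f mi"
      proof -
        have "(105 * real (n + 1) / real mi) powr a = (105 * real (n + 1)) powr a / real mi powr a"
          by (rule powr_divide)
        also have "(105 * real (n + 1)) powr a = 105 powr a * real (n + 1) powr a"
          by (rule powr_mult)
        also have "real mi powr a = 1 / f mi" by (simp add: f_def powr_minus_divide)
        finally show ?thesis by simp
      qed
      also have "105 powr a \<le> 2 powr (11 / 4 * \<epsilon>)"
      proof -
        have "105 powr a \<le> 2048 powr a" by (rule powr_mono2) (use a0 in auto)
        also have "2048 powr a = 2 powr (11 / 4 * \<epsilon>)"
        proof -
          have e1: "((2::real) powr 11) powr a = 2 powr (11 * a)" by (rule powr_powr)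
          have e2: "(2::real) powr 11 = 2048" by simp
          have "(2048::real) powr a = 2 powr (11 * a)" using e1 unfolding e2 .
          also have "11 * a = 11 / 4 * \<epsilon>" by (simp add: a_def)
          finally show ?thesis .
        qed
        finally show ?thesis .
      qed
      then have "105 powr a * real (n + 1) powr a * f mi \<le> 2 powr (11 / 4 * \<epsilon>) * real (n + 1) powr a * f mi"
        using fmi by (intro mult_right_mono) auto
      finally show ?thesis unfolding K_def by simp
    qed
    then show ?thesis unfolding q_def p_def mi_def .
  qed
  have "(\<Sum>i=1..n. abs_pow (std_normal_quantile (real i / real (n + 1))) (2 * \<epsilon>))
      \<le> (\<Sum>i=1..n. K * f (min i (n + 1 - i)))"
    by (rule sum_mono) (rule tm)
  also have "\<dots> = K * (\<Sum>i=1..n. f (min i (n + 1 - i)))" by (simp add: sum_distrib_left)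
  also have "\<dots> \<le> K * (2 * (\<Sum>j=1..c. f j))"
    by (rule mult_left_mono[OF msum_bound[OF f0 c2] K0])
  also have "\<dots> \<le> K * (2 * (1 + pow_ratio (real c) (1 - a)))"
    using sum_bound[OF a0 c1] K0 by (intro mult_left_mono) (auto simp: f_def)
  also have "\<dots> = 2 powr (11 / 4 * \<epsilon> + 1) * real (n + 1) powr (\<epsilon> / 4)
       * (1 + pow_ratio (real_of_int \<lceil>real (n + 1) / 2\<rceil>) (1 - \<epsilon> / 4))"
    unfolding cint by (simp add: K_def a_def powr_add)
  finally show ?thesis .
qed


end
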